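(* For every integer $\Delta\geq 1$, the symmetric directed star $\overleftrightarrow{K_{1,\Delta}}$ satisfies $$\chi'_{D_{1,2}}(\overleftrightarrow{K_{1,\Delta}}) = \left\lceil 2\sqrt{\Delta}\right\rceil.$$
   Context: For a simple graph $G$, the symmetric digraph $\overleftrightarrow{G}$ is obtained by replacing each edge $uv$ of $G$ by the pair of opposite arcs $\overrightarrow{uv}$ and $\overrightarrow{vu}$. An arc-colouring is proper of type I if any two consecutive arcs $\overrightarrow{uv},\overrightarrow{vw}$ (including $w=u$) receive distinct colours, i.e. no monochromatic 2-cycles and no monochromatic 2-paths. An arc-colouring is distinguishing if the only automorphism of $\overleftrightarrow{G}$ preserving the colour of every arc is the identity. $\chi'_{D_{1,2}}(\overleftrightarrow{G})$ is the least number of colours in a distinguishing proper arc-colouring of type I of $\overleftrightarrow{G}$. *)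

theory Defs
  imports Complex_Main
begin

text \<open>A finite simple graph is given by a vertex set V and an edge relation E
(symmetric, irreflexive, within V).\<close>

definition sym_arcs :: "'a set \<Rightarrow> ('a \<Rightarrow> 'a \<Rightarrow> bool) \<Rightarrow> ('a \<times> 'a) set" where
  "sym_arcs V E = {(u,v). u \<in> V \<and> v \<in> V \<and> E u v}"

definition digraph_aut :: "'a set \<Rightarrow> ('a \<times> 'a) set \<Rightarrow> ('a \<Rightarrow> 'a) \<Rightarrow> bool" where
  "digraph_aut V A f \<longleftrightarrow> bij_betw f V V \<and>
     (\<forall>u\<in>V. \<forall>v\<in>V. ((u,v) \<in> A \<longleftrightarrow> (f u, f v) \<in> A))"

definition proper_type_I :: "('a \<times> 'a) set \<Rightarrow> ('a \<times> 'a \<Rightarrow> nat) \<Rightarrow> bool" where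
  "proper_type_I A c \<longleftrightarrow> (\<forall>u v w. (u,v) \<in> A \<longrightarrow> (v,w) \<in> A \<longrightarrow> c (u,v) \<noteq> c (v,w))"

definition distinguishing :: "'a set \<Rightarrow> ('a \<times> 'a) set \<Rightarrow> ('a \<times> 'a \<Rightarrow> nat) \<Rightarrow> bool" where
  "distinguishing V A c \<longleftrightarrow>
     (\<forall>f. digraph_aut V A f \<and> (\<forall>a\<in>A. c (f (fst a), f (snd a)) = c a) \<longrightarrow> (\<forall>x\<in>V. f x = x))"

definition chi_D12 :: "'a set \<Rightarrow> ('a \<Rightarrow> 'a \<Rightarrow> bool) \<Rightarrow> nat" where
  "chi_D12 V E = (LEAST k. \<exists>c. (\<forall>a\<in>sym_arcs V E. c a < k) \<and>
       proper_type_I (sym_arcs V E) c \<and> distinguishing V (sym_arcs V E) c)"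

text \<open>The star K_{1,\<Delta>}: centre 0, leaves 1..\<Delta>.\<close>
definition star_V :: "nat \<Rightarrow> nat set" where
  "star_V d = {0..d}"

definition star_E :: "nat \<Rightarrow> nat \<Rightarrow> nat \<Rightarrow> bool" where
  "star_E d u v \<longleftrightarrow> (u = 0 \<and> 1 \<le> v \<and> v \<le> d) \<or> (v = 0 \<and> 1 \<le> u \<and> u \<le> d)"

end

theory Submission
  imports Defs
begin

lemma arcs_star: "(u,v) \<in> sym_arcs (star_V d) (star_E d) \<longleftrightarrow>
   (u = 0 \<and> 1 \<le> v \<and> v \<le> d) \<or> (v = 0 \<and> 1 \<le> u \<and> u \<le> d)"
  unfolding sym_arcs_def star_V_def star_E_def by auto

lemma lower:
  assumes bound: "\<forall>a\<in>sym_arcs (star_V d) (star_E d). c a < k"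
    and prp: "proper_type_I (sym_arcs (star_V d) (star_E d)) c"
    and dist: "distinguishing (star_V d) (sym_arcs (star_V d) (star_E d)) c"
  shows "4 * d \<le> k^2"
proof -
  let ?A = "(\<lambda>j. c (0,j)) ` {1..d}"
  let ?B = "(\<lambda>j. c (j,0)) ` {1..d}"
  have AB: "?A \<inter> ?B = {}"
  proof (rule ccontr)
    assume "?A \<inter> ?B \<noteq> {}"
    then obtain i j where ij: "i \<in> {1..d}" "j \<in> {1..d}" "c (0,i) = c (j,0)" by blast
    have "c (j,0) \<noteq> c (0,i)" using prp ij unfolding proper_type_I_def arcs_star
      by (metis atLeastAtMost_iff)
    then show False using ij by simp
  qed
  have sub: "?A \<union> ?B \<subseteq> {..<k}" using bound by (auto simp: arcs_star)
  have "card ?A + card ?B = card (?A \<union> ?B)" using AB by (simp add: card_Un_disjoint)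
  also have "\<dots> \<le> k" using card_mono[OF _ sub] by simp
  finally have ck: "card ?A + card ?B \<le> k" .
  have inj: "inj_on (\<lambda>i. (c (0,i), c (i,0))) {1..d}"
  proof (rule inj_onI, rule ccontr)
    fix i j assume i: "i \<in> {1..d}" and j: "j \<in> {1..d}"
      and eq: "(c (0,i), c (i,0)) = (c (0,j), c (j,0))" and ne: "i \<noteq> j"
    define f where "f = (\<lambda>x::nat. if x = i then j else if x = j then i else x)"
    have ff: "f (f x) = x" for x unfolding f_def by auto
    have fV: "x \<in> star_V d \<Longrightarrow> f x \<in> star_V d" for x using i j unfolding f_def star_V_def by auto
    have bij: "bij_betw f (star_V d) (star_V d)"
      by (rule bij_betw_byWitness[where f'=f]) (auto simp: ff fV)
    have f0: "f 0 = 0" using i j unfolding f_def by auto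
    have fl: "1 \<le> f x \<and> f x \<le> d \<longleftrightarrow> 1 \<le> x \<and> x \<le> d" for x using i j unfolding f_def by auto
    have f0': "f x = 0 \<longleftrightarrow> x = 0" for x using i j unfolding f_def by auto
    have aut: "digraph_aut (star_V d) (sym_arcs (star_V d) (star_E d)) f"
      unfolding digraph_aut_def arcs_star using bij i j by (auto simp: f_def)
    have col: "\<forall>a\<in>sym_arcs (star_V d) (star_E d). c (f (fst a), f (snd a)) = c a"
    proof
      fix a assume "a \<in> sym_arcs (star_V d) (star_E d)"
      then obtain u v where a: "a = (u,v)" and "(u = 0 \<and> 1 \<le> v \<and> v \<le> d) \<or> (v = 0 \<and> 1 \<le> u \<and> u \<le> d)"
        by (metis arcs_star surj_pair)
      then show "c (f (fst a), f (snd a)) = c a" using eq f0 unfolding f_def by auto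
    qed
    have "f i = i" using dist aut col i unfolding distinguishing_def star_V_def by auto
    then show False using ne unfolding f_def by auto
  qed
  have "(\<lambda>i. (c (0,i), c (i,0))) ` {1..d} \<subseteq> ?A \<times> ?B" by auto
  then have "card {1..d} \<le> card (?A \<times> ?B)"
    using card_inj_on_le[OF inj] by (meson finite_SigmaI finite_imageI finite_atLeastAtMost)
  then have dle: "d \<le> card ?A * card ?B" by (simp add: card_cartesian_product)
  have key: "4 * (x*y) \<le> (x+y)^2" for x y :: nat
  proof -
    have "int (4*(x*y)) \<le> int ((x+y)^2)"
      using zero_le_power2[of "int x - int y"] by (simp add: power2_eq_square algebra_simps)
    then show ?thesis by linarith
  qed
  have "4*d \<le> 4 * (card ?A * card ?B)" using dle by simp
  also have "\<dots> \<le> (card ?A + card ?B)^2" by (rule key)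
  also have "\<dots> \<le> k^2" using ck by (simp add: power_mono)
  finally show ?thesis .
qed


lemma upper:
  assumes a1: "1 \<le> a" and ab: "d \<le> a * b"
  shows "\<exists>c. (\<forall>x\<in>sym_arcs (star_V d) (star_E d). c x < a + b) \<and>
       proper_type_I (sym_arcs (star_V d) (star_E d)) c \<and>
       distinguishing (star_V d) (sym_arcs (star_V d) (star_E d)) c"
proof -
  define c where "c = (\<lambda>(u::nat,v::nat). if u = 0 then (v-1) mod a else a + (u-1) div a)"
  have c0: "c (0,v) = (v-1) mod a" for v unfolding c_def by simp
  have c1: "u \<noteq> 0 \<Longrightarrow> c (u,v) = a + (u-1) div a" for u v unfolding c_def by simp
  have lt: "c (0,v) < a" for v using a1 c0 by simp
  have bnd: "\<forall>x\<in>sym_arcs (star_V d) (star_E d). c x < a + b"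
  proof
    fix x assume "x \<in> sym_arcs (star_V d) (star_E d)"
    then obtain u v where x: "x = (u,v)" and "(u = 0 \<and> 1 \<le> v \<and> v \<le> d) \<or> (v = 0 \<and> 1 \<le> u \<and> u \<le> d)"
      by (metis arcs_star surj_pair)
    then consider "u = 0" | "v = 0 \<and> 1 \<le> u \<and> u \<le> d" by blast
    then show "c x < a + b"
    proof cases
      case 1 then show ?thesis using lt[of v] x by simp
    next
      case 2
      have "u - 1 < a * b" using 2 ab by linarith
      then have "(u-1) div a < b" using a1 by (simp add: div_less_iff_less_mult mult.commute)
      then show ?thesis using 2 x c1 by simp
    qed
  qed
  have prp: "proper_type_I (sym_arcs (star_V d) (star_E d)) c"
    unfolding proper_type_I_def arcs_star
  proof (intro allI impI)
    fix u v w
    assume h1: "u = 0 \<and> 1 \<le> v \<and> v \<le> d \<or> v = 0 \<and> 1 \<le> u \<and> u \<le> d"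
      and h2: "v = 0 \<and> 1 \<le> w \<and> w \<le> d \<or> w = 0 \<and> 1 \<le> v \<and> v \<le> d"
    show "c (u, v) \<noteq> c (v, w)"
    proof (cases "u = 0")
      case True
      then have "v \<noteq> 0" using h1 by auto
      then show ?thesis using True lt[of v] c1[of v w] by simp
    next
      case False
      then have "v = 0" using h1 by auto
      then show ?thesis using False lt[of w] c1[of u v] by simp
    qed
  qed
  have dst: "distinguishing (star_V d) (sym_arcs (star_V d) (star_E d)) c"
    unfolding distinguishing_def
  proof (intro allI impI ballI)
    fix f x
    assume h: "digraph_aut (star_V d) (sym_arcs (star_V d) (star_E d)) f \<and>
         (\<forall>a\<in>sym_arcs (star_V d) (star_E d). c (f (fst a), f (snd a)) = c a)"
      and x: "x \<in> star_V d"
    have bij: "bij_betw f (star_V d) (star_V d)" using h unfolding digraph_aut_def by simp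
    have col: "\<And>u v. (u,v) \<in> sym_arcs (star_V d) (star_E d) \<Longrightarrow> c (f u, f v) = c (u,v)"
      using h by fastforce
    show "f x = x"
    proof (cases "d = 0")
      case True
      then have "x = 0" "star_V d = {0}" using x unfolding star_V_def by auto
      then show ?thesis using bij by (metis bij_betwE singletonD singletonI)
    next
      case False
      have arc01: "(0,1) \<in> sym_arcs (star_V d) (star_E d)" using False by (simp add: arcs_star)
      have f0: "f 0 = 0"
      proof (rule ccontr)
        assume "f 0 \<noteq> 0"
        then have "c (f 0, f 1) \<ge> a" using c1 by simp
        moreover have "c (f 0, f 1) = c (0,1)" using col[OF arc01] .
        ultimately show False using lt[of 1] by simp
      qed
      show ?thesis
      proof (cases "x = 0")
        case True then show ?thesis using f0 by simp
      next
        case xn: False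
        have xl: "1 \<le> x" "x \<le> d" using x xn unfolding star_V_def by auto
        have "0 \<in> star_V d" unfolding star_V_def by simp
        then have fxn: "f x \<noteq> 0" using bij x xn f0 unfolding bij_betw_def inj_on_def by metis
        have e1: "c (0, f x) = c (0, x)" using col[of 0 x] xl f0 by (simp add: arcs_star)
        have e2: "c (f x, 0) = c (x, 0)" using col[of x 0] xl f0 by (simp add: arcs_star)
        have m: "(f x - 1) mod a = (x - 1) mod a" using e1 c0 by simp
        have dv: "(f x - 1) div a = (x - 1) div a" using e2 c1 fxn xn by simp
        have "f x - 1 = x - 1" by (metis m dv div_mult_mod_eq)
        then show ?thesis using fxn xn by linarith
      qed
    qed
  qed
  show ?thesis using bnd prp dst by blast
qed


theorem proposition2p4:
  fixes \<Delta> :: nat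
  assumes "\<Delta> \<ge> 1"
  shows "int (chi_D12 (star_V \<Delta>) (star_E \<Delta>)) = \<lceil>2 * sqrt (real \<Delta>)\<rceil>"
proof -
  define s where "s = 2 * sqrt (real \<Delta>)"
  define k0 where "k0 = nat \<lceil>s\<rceil>"
  have s2: "s \<ge> 2" unfolding s_def using assms by simp
  have ceq: "int k0 = \<lceil>s\<rceil>" unfolding k0_def using s2 by simp
  have ks: "real k0 \<ge> s" using ceq by (metis le_of_int_ceiling of_int_of_nat_eq)
  have k2: "k0 \<ge> 2" using ks s2 by linarith
  have ssq: "s^2 = 4 * real \<Delta>" unfolding s_def by (simp add: power_mult_distrib)
  have "real (4*\<Delta>) \<le> real (k0^2)"
    using ssq power_mono[OF ks, of 2] s2 by simp
  then have k4: "4*\<Delta> \<le> k0^2" by linarith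
  define a where "a = k0 div 2"
  define b where "b = k0 - a"
  have a1: "1 \<le> a" unfolding a_def using k2 by simp
  have kab: "k0 = a + b" unfolding b_def a_def by simp
  have "k0^2 \<le> 4*(a*b) + 1"
  proof (cases "even k0")
    case True
    then have "k0 = 2*a" "b = a" unfolding a_def b_def by auto
    then show ?thesis by (simp add: power2_eq_square)
  next
    case False
    then have "k0 = 2*a+1" "b = a+1" unfolding a_def b_def by presburger+
    then show ?thesis by (simp add: power2_eq_square algebra_simps)
  qed
  then have dab: "\<Delta> \<le> a*b" using k4 by linarith
  obtain c where c: "(\<forall>x\<in>sym_arcs (star_V \<Delta>) (star_E \<Delta>). c x < k0) \<and>
       proper_type_I (sym_arcs (star_V \<Delta>) (star_E \<Delta>)) c \<and>
       distinguishing (star_V \<Delta>) (sym_arcs (star_V \<Delta>) (star_E \<Delta>)) c"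
    using upper[OF a1 dab] kab by metis
  have least: "k0 \<le> k" if "\<exists>c. (\<forall>x\<in>sym_arcs (star_V \<Delta>) (star_E \<Delta>). c x < k) \<and>
       proper_type_I (sym_arcs (star_V \<Delta>) (star_E \<Delta>)) c \<and>
       distinguishing (star_V \<Delta>) (sym_arcs (star_V \<Delta>) (star_E \<Delta>)) c" for k
  proof -
    have "4*\<Delta> \<le> k^2" using that lower by blast
    then have "s^2 \<le> (real k)^2" using ssq by (metis of_nat_le_iff of_nat_mult of_nat_numeral of_nat_power)
    then have "s \<le> real k" using s2 by (meson power2_le_imp_le of_nat_0_le_iff)
    then have "\<lceil>s\<rceil> \<le> int k" by (simp add: ceiling_le_iff)
    then show ?thesis using ceq by linarith
  qed
  have "chi_D12 (star_V \<Delta>) (star_E \<Delta>) = k0"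
    unfolding chi_D12_def
    by (rule Least_equality) (use c least in blast)+
  then show ?thesis using ceq s_def by simp
qed

end
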